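(* Let $\Lambda$ be a countable index set, $\overline{a},\overline{r}$ sequences of positive reals indexed by $\Lambda$, let $0<t<p\le 2$ and $x\in\mathbb{R}^\Lambda$. Then $x\in k_t$ if and only if \[\gamma(x):=\sup_{\alpha>0}\alpha^{\frac{t-p}{p}}\|x-T_\alpha(x)\|_{\overline{\omega}_p,p}<\infty.\] More precisely, \[\gamma(x)\le 2\left(2^{p-t}-1\right)^{-1/p}\|x\|_{k_t}^{t/p}\quad\text{and}\quad \|x\|_{k_t}\le 2^{p/t}(2^t-1)^{-1/t}\gamma(x)^{p/t}.\]
   Context: For a sequence $\omega$ of positive reals and $p\in(0,\infty)$, $\|x\|_{\omega,p}=\left(\sum_{j\in\Lambda}\omega_j^p|x_j|^p\right)^{1/p}$ (possibly $+\infty$) and $\ell^p_\omega=\{x:\|x\|_{\omega,p}<\infty\}$. For $s\in(0,2]$, $(\overline{\omega}_s)_j=(\overline{a}_j^{2s-2}\overline{r}_j^{2-s})^{1/s}$. For $t\in(0,2)$, $k_t=\{x\in\mathbb{R}^\Lambda:\|x\|_{k_t}<\infty\}$ where $\|x\|_{k_t}=\sup_{\alpha>0}\alpha\left(\sum_{j\in\Lambda}\overline{a}_j^{-2}\overline{r}_j^2\mathbf{1}_{\{\overline{a}_j^{-2}\overline{r}_j\alpha<|x_j|\}}\right)^{1/t}$. For $\alpha>0$ the thresholding map $T_\alpha:\mathbb{R}^\Lambda\to\mathbb{R}^\Lambda$ is $T_\alpha(x)_j=x_j$ if $\overline{a}_j^{-2}\overline{r}_j\alpha<|x_j|$ and $T_\alpha(x)_j=0$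 otherwise. *)

theory Defs
  imports "HOL-Analysis.Analysis"
begin

text \<open>Index set \<Lambda> is a countable set of indices of type 'i; sequences are functions
  'i \<Rightarrow> real (only their values on \<Lambda> matter).\<close>

text \<open>Real power of an extended nonnegative real, for positive exponents: \<infinity>^q = \<infinity>.\<close>
definition epowr :: "ennreal \<Rightarrow> real \<Rightarrow> ennreal" where
  "epowr s q = (if s = \<infinity> then \<infinity> else ennreal (enn2real s powr q))"

definition wnorm :: "'i set \<Rightarrow> ('i \<Rightarrow> real) \<Rightarrow> real \<Rightarrow> ('i \<Rightarrow> real) \<Rightarrow> ennreal" where
  "wnorm \<Lambda> \<omega> p x = epowr (\<Sum>\<^sub>\<infinity> j\<in>\<Lambda>. ennreal ((\<omega> j) powr p * \<bar>x j\<bar> powr p)) (1 / p)"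

definition lp_w :: "'i set \<Rightarrow> ('i \<Rightarrow> real) \<Rightarrow> real \<Rightarrow> ('i \<Rightarrow> real) set" where
  "lp_w \<Lambda> \<omega> p = {x. wnorm \<Lambda> \<omega> p x < \<infinity>}"

definition omega_bar :: "('i \<Rightarrow> real) \<Rightarrow> ('i \<Rightarrow> real) \<Rightarrow> real \<Rightarrow> 'i \<Rightarrow> real" where
  "omega_bar a r s j = ((a j) powr (2 * s - 2) * (r j) powr (2 - s)) powr (1 / s)"

definition kt_norm :: "'i set \<Rightarrow> ('i \<Rightarrow> real) \<Rightarrow> ('i \<Rightarrow> real) \<Rightarrow> real \<Rightarrow> ('i \<Rightarrow> real) \<Rightarrow> ennreal" where
  "kt_norm \<Lambda> a r t x = (SUP \<alpha>\<in>{0<..}. ennreal \<alpha> *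
      epowr (\<Sum>\<^sub>\<infinity> j\<in>\<Lambda>. ennreal ((a j) powr (-2) * (r j)^2 *
               (if (a j) powr (-2) * r j * \<alpha> < \<bar>x j\<bar> then 1 else 0))) (1 / t))"

definition k_space :: "'i set \<Rightarrow> ('i \<Rightarrow> real) \<Rightarrow> ('i \<Rightarrow> real) \<Rightarrow> real \<Rightarrow> ('i \<Rightarrow> real) set" where
  "k_space \<Lambda> a r t = {x. kt_norm \<Lambda> a r t x < \<infinity>}"

definition thresh :: "('i \<Rightarrow> real) \<Rightarrow> ('i \<Rightarrow> real) \<Rightarrow> real \<Rightarrow> ('i \<Rightarrow> real) \<Rightarrow> 'i \<Rightarrow> real" where
  "thresh a r \<alpha> x j = (if (a j) powr (-2) * r j * \<alpha> < \<bar>x j\<bar> then x j else 0)"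

end

theory Submission
  imports Defs
begin

lemma sum_infsum_ennreal:
  fixes G :: "'i \<Rightarrow> 'k \<Rightarrow> ennreal"
  assumes "finite F"
  shows "(\<Sum>j\<in>F. \<Sum>\<^sub>\<infinity>k\<in>B. G j k) = (\<Sum>\<^sub>\<infinity>k\<in>B. \<Sum>j\<in>F. G j k)"
  using assms
proof (induction F rule: finite_induct)
  case empty then show ?case by simp
next
  case (insert x F)
  then show ?case
    by (simp add: infsum_add nonneg_summable_on_complete)
qed

lemma finite_sum_le_infsum_ennreal:
  fixes f :: "'i \<Rightarrow> ennreal"
  assumes "finite F" "F \<subseteq> A"
  shows "(\<Sum>j\<in>F. f j) \<le> (\<Sum>\<^sub>\<infinity>j\<in>A. f j)"
proof -
  have "(\<Sum>\<^sub>\<infinity>j\<in>F. f j) \<le> (\<Sum>\<^sub>\<infinity>j\<in>A. f j)"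
    by (rule infsum_mono_neutral) (use assms in \<open>auto intro: nonneg_summable_on_complete\<close>)
  then show ?thesis using assms by simp
qed

lemma infsum_swap_le_ennreal:
  fixes G :: "'i \<Rightarrow> 'k \<Rightarrow> ennreal"
  shows "(\<Sum>\<^sub>\<infinity>j\<in>A. \<Sum>\<^sub>\<infinity>k\<in>B. G j k) \<le> (\<Sum>\<^sub>\<infinity>k\<in>B. \<Sum>\<^sub>\<infinity>j\<in>A. G j k)"
proof (rule infsum_le_finite_sums)
  show "(\<lambda>j. \<Sum>\<^sub>\<infinity>k\<in>B. G j k) summable_on A" by (rule nonneg_summable_on_complete) simp
  fix F assume F: "finite F" "F \<subseteq> A"
  have "(\<Sum>j\<in>F. \<Sum>\<^sub>\<infinity>k\<in>B. G j k) = (\<Sum>\<^sub>\<infinity>k\<in>B. \<Sum>j\<in>F. G j k)"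
    by (rule sum_infsum_ennreal[OF F(1)])
  also have "\<dots> \<le> (\<Sum>\<^sub>\<infinity>k\<in>B. \<Sum>\<^sub>\<infinity>j\<in>A. G j k)"
    by (rule infsum_mono) (auto intro: nonneg_summable_on_complete finite_sum_le_infsum_ennreal[OF F])
  finally show "(\<Sum>j\<in>F. \<Sum>\<^sub>\<infinity>k\<in>B. G j k) \<le> (\<Sum>\<^sub>\<infinity>k\<in>B. \<Sum>\<^sub>\<infinity>j\<in>A. G j k)" .
qed

lemma term_le_infsum_ennreal:
  fixes f :: "nat \<Rightarrow> ennreal"
  shows "f k \<le> (\<Sum>\<^sub>\<infinity>k. f k)"
proof -
  have "(\<Sum>\<^sub>\<infinity>i\<in>{k}. f i) \<le> (\<Sum>\<^sub>\<infinity>i. f i)"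
    by (rule infsum_mono_neutral) (auto intro: nonneg_summable_on_complete)
  then show ?thesis by simp
qed

lemma geom_ennreal:
  fixes c q :: real
  assumes "0 \<le> c" "0 \<le> q" "q < 1"
  shows "(\<Sum>\<^sub>\<infinity>k. ennreal (c * q ^ k)) = ennreal (c / (1 - q))"
proof -
  have "(\<lambda>k. c * q ^ k) sums (c * (1 / (1 - q)))"
    by (rule sums_mult) (rule geometric_sums, use assms in auto)
  then have h: "((\<lambda>k. c * q ^ k) has_sum (c / (1 - q))) UNIV"
    by (intro sums_nonneg_imp_has_sum) (use assms in auto)
  have "((ennreal \<circ> (\<lambda>k. c * q ^ k)) has_sum ennreal (c / (1 - q))) UNIV"
    by (rule has_sum_comm_additive_general[OF _ _ h])
       (auto simp: sum_ennreal assms intro!: tendsto_ennrealI)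
  then show ?thesis by (simp add: infsumI o_def)
qed

lemma dyadic_ex:
  fixes s L :: real
  assumes "0 < s" "s \<le> L"
  shows "\<exists>k::nat. L / 2^(k+1) < s \<and> s \<le> L / 2^k"
proof -
  have q: "1 \<le> L / s" using assms by simp
  obtain n where n: "L / s < 2 ^ n" using real_arch_pow[of 2 "L/s"] by auto
  define P where "P m \<longleftrightarrow> L / s < 2 ^ Suc m" for m :: nat
  have "P n" using n unfolding P_def by (smt (verit) one_le_power power_Suc2 mult_le_cancel_left1)
  define k where "k = (LEAST m. P m)"
  have Pk: "P k" unfolding k_def by (rule LeastI[of P n]) (fact)
  have a: "2^k \<le> L / s"
  proof (cases k)
    case 0 then show ?thesis using q by simp
  next
    case (Suc m)
    then have "\<not> P m" unfolding k_def by (metis Suc_n_not_le_n Least_le)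
    then show ?thesis using Suc unfolding P_def by simp
  qed
  have b: "L / s < 2^(k+1)" using Pk unfolding P_def by simp
  show ?thesis
    using a b assms by (intro exI[of _ k]) (auto simp: field_simps)
qed


lemma pow2_powr: "(2::real)^k = 2 powr (real k)" by (simp add: powr_realpow)

lemma R1:
  fixes \<alpha> K t p :: real assumes "\<alpha> > 0"
  shows "(\<alpha> / 2^k) powr p * (K * (\<alpha> / 2^(k+1)) powr (-t)) = (K * \<alpha> powr (p-t) * 2 powr t) * (2 powr (t-p))^k"
proof -
  have "(\<alpha> / 2^k) powr p = \<alpha> powr p * 2 powr (- p * k)"
    using assms by (simp add: powr_divide pow2_powr powr_powr powr_minus_divide mult.commute)
  moreover have "(\<alpha> / 2^(k+1)) powr (-t) = \<alpha> powr (-t) * 2 powr (t * (k+1))"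
    using assms unfolding pow2_powr[of "k+1"] by (simp add: powr_divide pow2_powr powr_powr powr_minus_divide mult.commute del: of_nat_Suc)
  moreover have "(2 powr (t-p))^k = 2 powr ((t-p)*k)"
    by (simp add: powr_realpow[symmetric] powr_powr)
  moreover have "\<alpha> powr (p-t) = \<alpha> powr p * \<alpha> powr (-t)"
    by (simp add: powr_add[symmetric])
  moreover have "2 powr t * 2 powr ((t-p)*k) = 2 powr (- p * k) * (2::real) powr (t * (k+1))"
    by (simp add: powr_add[symmetric] algebra_simps)
  ultimately show ?thesis
    by (simp add: mult_ac)
qed

lemma R2:
  fixes t p :: real assumes "t < p"
  shows "2 powr t / (1 - 2 powr (t-p)) = 2 powr p / (2 powr (p-t) - 1)"
proof -
  have lt: "2 powr t < (2::real) powr p" using assms by simp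
  have "2 powr (t-p) = 2 powr t / (2::real) powr p" "2 powr (p-t) = 2 powr p / (2::real) powr t"
    by (simp_all add: powr_diff)
  then show ?thesis using lt by (simp add: field_simps)
qed

lemma R3:
  fixes \<alpha> X D t p :: real assumes "\<alpha> > 0" "X \<ge> 0" "D \<ge> 0" "p > 0"
  shows "\<alpha> powr ((t-p)/p) * (X * \<alpha> powr (p-t) * D) powr (1/p) = D powr (1/p) * X powr (1/p)"
proof -
  have "(X * \<alpha> powr (p-t) * D) powr (1/p) = X powr (1/p) * \<alpha> powr ((p-t)/p) * D powr (1/p)"
    using assms by (simp add: powr_mult powr_powr)
  moreover have "\<alpha> powr ((t-p)/p) * \<alpha> powr ((p-t)/p) = 1"
    using assms by (simp add: powr_add[symmetric] diff_divide_distrib)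
  ultimately show ?thesis by (simp add: mult_ac)
qed

lemma R4:
  fixes \<beta> G t p :: real assumes "\<beta> > 0"
  shows "(\<beta> * 2^k) powr (-p) * (G * (\<beta> * 2^(k+1)) powr (p-t)) = (G * \<beta> powr (-t) * 2 powr (p-t)) * (2 powr (-t))^k"
proof -
  have "(\<beta> * 2^k) powr (-p) = \<beta> powr (-p) * 2 powr (- p * k)"
    using assms by (simp add: powr_mult pow2_powr powr_powr mult.commute)
  moreover have "(\<beta> * 2^(k+1)) powr (p-t) = \<beta> powr (p-t) * 2 powr ((p-t) * (k+1))"
    using assms unfolding pow2_powr[of "k+1"] by (simp add: powr_mult pow2_powr powr_powr mult.commute del: of_nat_Suc)
  moreover have "(2 powr (-t))^k = 2 powr ((-t)*k)"
    by (simp add: powr_realpow[symmetric] powr_powr)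
  moreover have "\<beta> powr (-p) * \<beta> powr (p-t) = \<beta> powr (-t)"
    by (simp add: powr_add[symmetric])
  moreover have "2 powr (- p * k) * 2 powr ((p-t) * (k+1)) = 2 powr (p-t) * (2::real) powr ((-t)*k)"
    by (simp add: powr_add[symmetric] algebra_simps)
  ultimately show ?thesis
    by (simp add: mult_ac)
qed

lemma R5:
  fixes t p :: real assumes "0 < t"
  shows "2 powr (p-t) / (1 - 2 powr (-t)) = 2 powr p / (2 powr t - 1)"
proof -
  have lt: "1 < (2::real) powr t" using assms by simp
  have e: "2 powr (-t) = 1 / (2::real) powr t" "2 powr (p-t) = 2 powr p / (2::real) powr t"
    by (simp_all add: powr_diff powr_minus_divide)
  have g: "(P/u)/(1-1/u) = P/(u-1)" if "u > 1" for u P :: real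
    using that by (simp add: field_simps)
  show ?thesis unfolding e by (rule g[OF lt])
qed

lemma R6:
  fixes \<beta> G D t :: real assumes "\<beta> > 0" "G \<ge> 0" "D \<ge> 0" "t > 0"
  shows "\<beta> * (G * \<beta> powr (-t) * D) powr (1/t) = D powr (1/t) * G powr (1/t)"
proof -
  have "(G * \<beta> powr (-t) * D) powr (1/t) = G powr (1/t) * \<beta> powr (-1) * D powr (1/t)"
    using assms by (simp add: powr_mult powr_powr)
  then show ?thesis using assms by (simp add: powr_minus field_simps)
qed

lemma R7:
  fixes p t :: real assumes "t < p" "0 < p"
  shows "(2 powr p / (2 powr (p-t) - 1)) powr (1/p) = 2 * (2 powr (p - t) - 1) powr (-1/p)"
proof -
  have "1 < (2::real) powr (p-t)" using assms by simp
  then show ?thesis using assms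
    by (simp add: powr_divide powr_powr powr_minus_divide divide_simps)
qed

lemma R8:
  fixes p t :: real assumes "0 < t"
  shows "(2 powr p / (2 powr t - 1)) powr (1/t) = 2 powr (p / t) * (2 powr t - 1) powr (-1/t)"
proof -
  have "1 < (2::real) powr t" using assms by simp
  then show ?thesis using assms
    by (simp add: powr_divide powr_powr powr_minus_divide divide_simps)
qed


lemma epowr_ennreal: "0 \<le> u \<Longrightarrow> epowr (ennreal u) q = ennreal (u powr q)"
  by (simp add: epowr_def)

lemma epowr_top: "epowr top q = top"
  by (simp add: epowr_def)

lemma epowr_le:
  assumes "0 < q" "0 \<le> M" "s \<le> ennreal M"
  shows "epowr s q \<le> ennreal (M powr q)"
proof -
  have "s < top" using assms(3) ennreal_less_top le_less_trans by blast
  then have "s \<noteq> \<infinity>" by simp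
  then obtain u where u: "s = ennreal u" "0 \<le> u" by (cases s) auto
  then have "u \<le> M" using assms by simp
  then show ?thesis using u assms by (simp add: epowr_ennreal powr_mono2)
qed

lemma epowr_extract:
  assumes "0 < a" "0 < q" "0 \<le> B" "ennreal a * epowr s q \<le> ennreal B"
  shows "s \<le> ennreal ((B / a) powr (1 / q))"
proof -
  have "s \<noteq> \<infinity>"
  proof
    assume "s = \<infinity>"
    then have "ennreal a * epowr s q = top" using assms(1) by (simp add: epowr_top ennreal_mult_top)
    then show False using assms(4) ennreal_less_top by (metis leD)
  qed
  then obtain u where u: "s = ennreal u" "0 \<le> u" by (cases s) auto
  have "ennreal (a * u powr q) \<le> ennreal B"
    using assms(1,4) u by (simp add: epowr_ennreal ennreal_mult)
  then have "a * u powr q \<le> B" using assms(3) by simp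
  then have "u powr q \<le> B / a" using assms(1) by (simp add: field_simps)
  then have "(u powr q) powr (1/q) \<le> (B / a) powr (1/q)"
    using assms by (intro powr_mono2) auto
  then have "u \<le> (B / a) powr (1/q)" using assms u by (simp add: powr_powr)
  then show ?thesis using u by simp
qed

lemma infsum_cmult_ennreal:
  fixes f :: "'i \<Rightarrow> ennreal"
  shows "(\<Sum>\<^sub>\<infinity>j\<in>A. c * f j) = c * (\<Sum>\<^sub>\<infinity>j\<in>A. f j)"
  by (simp add: nonneg_infsum_complete sum_distrib_left SUP_mult_left_ennreal)


theorem lemma3p6:
  fixes \<Lambda> :: "'i set" and a r x :: "'i \<Rightarrow> real" and t p :: real
  assumes "countable \<Lambda>"
    and "\<And>j. j \<in> \<Lambda> \<Longrightarrow> a j > 0"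
    and "\<And>j. j \<in> \<Lambda> \<Longrightarrow> r j > 0"
    and "0 < t" and "t < p" and "p \<le> 2"
  defines "\<gamma> \<equiv> (SUP \<alpha>\<in>{0<..}. ennreal (\<alpha> powr ((t - p) / p)) *
                   wnorm \<Lambda> (omega_bar a r p) p (\<lambda>j. x j - thresh a r \<alpha> x j))"
  shows "(x \<in> k_space \<Lambda> a r t \<longleftrightarrow> \<gamma> < \<infinity>)
    \<and> \<gamma> \<le> ennreal (2 * (2 powr (p - t) - 1) powr (-1 / p)) * epowr (kt_norm \<Lambda> a r t x) (t / p)
    \<and> kt_norm \<Lambda> a r t x \<le> ennreal (2 powr (p / t) * (2 powr t - 1) powr (-1 / t)) * epowr \<gamma> (p / t)"
proof -
  have pp: "0 < p" using assms(4,5) by simp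
  define c where "c j = a j powr (-2) * r j" for j
  define w where "w j = a j powr (-2) * (r j)^2" for j
  define y where "y j = \<bar>x j\<bar> / c j" for j
  define N where "N \<beta> = (\<Sum>\<^sub>\<infinity>j\<in>\<Lambda>. ennreal (a j powr (-2) * (r j)^2 *
               (if a j powr (-2) * r j * \<beta> < \<bar>x j\<bar> then 1 else 0)))" for \<beta>
  define E where "E \<alpha> = (\<Sum>\<^sub>\<infinity>j\<in>\<Lambda>. ennreal ((omega_bar a r p j) powr p * \<bar>x j - thresh a r \<alpha> x j\<bar> powr p))" for \<alpha>
  define K where "K = kt_norm \<Lambda> a r t x"
  define C1 where "C1 = 2 * (2 powr (p - t) - 1) powr (-1 / p)"
  define C2 where "C2 = 2 powr (p / t) * (2 powr t - 1) powr (-1 / t)"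
  define D1 where "D1 = 2 powr p / (2 powr (p - t) - 1)"
  define D2 where "D2 = 2 powr p / (2 powr t - 1)"
  have K_eq: "K = (SUP \<beta>\<in>{0<..}. ennreal \<beta> * epowr (N \<beta>) (1/t))"
    unfolding K_def kt_norm_def N_def ..
  have g_eq: "\<gamma> = (SUP \<alpha>\<in>{0<..}. ennreal (\<alpha> powr ((t-p)/p)) * epowr (E \<alpha>) (1/p))"
    unfolding \<gamma>_def wnorm_def E_def ..
  have cpos: "c j > 0" if "j \<in> \<Lambda>" for j using assms(2,3)[OF that] unfolding c_def by simp
  have wpos: "w j > 0" if "j \<in> \<Lambda>" for j using assms(2,3)[OF that] unfolding w_def by simp
  have y0: "y j \<ge> 0" if "j \<in> \<Lambda>" for j unfolding y_def
    using cpos[OF that] by simp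
  have key: "omega_bar a r p j powr p * \<bar>x j\<bar> powr p = w j * y j powr p" if "j \<in> \<Lambda>" for j
  proof -
    have aj: "a j > 0" and rj: "r j > 0" using assms(2,3)[OF that] by auto
    have ob: "omega_bar a r p j powr p = a j powr (2*p-2) * r j powr (2-p)"
      unfolding omega_bar_def using aj rj pp by (simp add: powr_powr)
    have cp: "c j powr p = a j powr (-2*p) * r j powr p"
      unfolding c_def using aj rj by (simp add: powr_mult powr_powr)
    have yp: "y j powr p = \<bar>x j\<bar> powr p / c j powr p"
      unfolding y_def using cpos[OF that] by (simp add: powr_divide)
    have w2: "w j = a j powr (-2) * r j powr 2"
      unfolding w_def using rj by simp
    have e1: "a j powr (2*p-2) = a j powr (-2) / a j powr (-2*p)"
      by (simp add: powr_diff[symmetric])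
    have e2: "r j powr (2-p) = r j powr 2 / r j powr p"
      by (simp add: powr_diff[symmetric])
    show ?thesis
      unfolding ob yp cp w2 e1 e2 by simp
  qed
  have Nterm: "a j powr (-2) * (r j)^2 * (if a j powr (-2) * r j * \<beta> < \<bar>x j\<bar> then 1 else 0)
      = (if \<beta> < y j then w j else 0)" if "j \<in> \<Lambda>" for j \<beta>
    using cpos[OF that] unfolding y_def w_def c_def[symmetric]
    by (simp add: pos_less_divide_eq mult.commute)
  have Eterm: "omega_bar a r p j powr p * \<bar>x j - thresh a r \<alpha> x j\<bar> powr p
      = (if y j \<le> \<alpha> then w j * y j powr p else 0)" if "j \<in> \<Lambda>" for j \<alpha>
    using cpos[OF that] key[OF that] pp unfolding thresh_def y_def c_def[symmetric]
    by (auto simp: pos_divide_le_eq mult.commute not_less)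
  have N_eq: "N \<beta> = (\<Sum>\<^sub>\<infinity>j\<in>\<Lambda>. ennreal (if \<beta> < y j then w j else 0))" for \<beta>
    unfolding N_def by (rule infsum_cong) (simp add: Nterm)
  have E_eq: "E \<alpha> = (\<Sum>\<^sub>\<infinity>j\<in>\<Lambda>. ennreal (if y j \<le> \<alpha> then w j * y j powr p else 0))" for \<alpha>
    unfolding E_def by (rule infsum_cong) (simp add: Eterm)
  have C1pos: "C1 > 0" unfolding C1_def using assms(5) by simp
  have C2pos: "C2 > 0" unfolding C2_def using assms(4) by simp
  have partA: "\<gamma> \<le> ennreal C1 * epowr K (t / p)"
  proof (cases "K = top")
    case True
    then show ?thesis using C1pos by (simp add: epowr_top ennreal_mult_top)
  next
    case False
    then obtain Kr where KK: "K = ennreal Kr" and Kr0: "0 \<le> Kr" by (cases K) auto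
    have Nb: "N \<beta> \<le> ennreal (Kr powr t * \<beta> powr (-t))" if b: "\<beta> > 0" for \<beta>
    proof -
      have h: "ennreal \<beta> * epowr (N \<beta>) (1/t) \<le> ennreal Kr"
        unfolding KK[symmetric] K_eq using b by (intro SUP_upper) auto
      have "N \<beta> \<le> ennreal ((Kr / \<beta>) powr (1 / (1/t)))"
        by (rule epowr_extract[OF b _ Kr0 h]) (use assms(4) in simp)
      then show ?thesis using b Kr0 by (simp add: powr_divide powr_minus_divide)
    qed
    have Eb: "E \<alpha> \<le> ennreal (Kr powr t * \<alpha> powr (p-t) * D1)" if al: "\<alpha> > 0" for \<alpha>
    proof -
      define u where "u k = (\<alpha> / 2^k) powr p" for k :: nat
      have "E \<alpha> \<le> (\<Sum>\<^sub>\<infinity>j\<in>\<Lambda>. \<Sum>\<^sub>\<infinity>k. ennreal (u k) * ennreal (if \<alpha> / 2^(k+1) < y j then w j else 0))"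
        unfolding E_eq
      proof (rule infsum_mono)
        fix j assume j: "j \<in> \<Lambda>"
        show "ennreal (if y j \<le> \<alpha> then w j * y j powr p else 0)
            \<le> (\<Sum>\<^sub>\<infinity>k. ennreal (u k) * ennreal (if \<alpha> / 2^(k+1) < y j then w j else 0))"
        proof (cases "y j \<le> \<alpha> \<and> y j > 0")
          case True
          then obtain k :: nat where k: "\<alpha> / 2^(k+1) < y j" "y j \<le> \<alpha> / 2^k"
            using dyadic_ex[of "y j" \<alpha>] by auto
          have "w j * y j powr p \<le> u k * w j"
            unfolding u_def using k wpos[OF j] y0[OF j] pp
            by (simp add: powr_mono2 mult.commute)
          then have "ennreal (if y j \<le> \<alpha> then w j * y j powr p else 0)
              \<le> ennreal (u k) * ennreal (if \<alpha> / 2^(k+1) < y j then w j else 0)"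
            using True k(1) wpos[OF j] unfolding u_def by (simp add: ennreal_mult[symmetric])
          also have "\<dots> \<le> (\<Sum>\<^sub>\<infinity>k. ennreal (u k) * ennreal (if \<alpha> / 2^(k+1) < y j then w j else 0))"
            by (rule term_le_infsum_ennreal)
          finally show ?thesis .
        next
          case False
          then have "y j > \<alpha> \<or> y j = 0" using y0[OF j] by auto
          then show ?thesis using pp by auto
        qed
      qed (auto intro: nonneg_summable_on_complete)
      also have "\<dots> \<le> (\<Sum>\<^sub>\<infinity>k. \<Sum>\<^sub>\<infinity>j\<in>\<Lambda>. ennreal (u k) * ennreal (if \<alpha> / 2^(k+1) < y j then w j else 0))"
        by (rule infsum_swap_le_ennreal)
      also have "\<dots> = (\<Sum>\<^sub>\<infinity>k. ennreal (u k) * N (\<alpha> / 2^(k+1)))"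
        unfolding N_eq by (simp add: infsum_cmult_ennreal)
      also have "\<dots> \<le> (\<Sum>\<^sub>\<infinity>k::nat. ennreal ((Kr powr t * \<alpha> powr (p-t) * 2 powr t) * (2 powr (t-p))^k))"
      proof (rule infsum_mono)
        fix k :: nat
        have "ennreal (u k) * N (\<alpha> / 2^(k+1)) \<le> ennreal (u k) * ennreal (Kr powr t * (\<alpha> / 2^(k+1)) powr (-t))"
          using Nb[of "\<alpha> / 2^(k+1)"] al by (intro mult_left_mono) auto
        also have "\<dots> = ennreal ((Kr powr t * \<alpha> powr (p-t) * 2 powr t) * (2 powr (t-p))^k)"
          unfolding u_def R1[OF al, symmetric] by (simp add: ennreal_mult[symmetric])
        finally show "ennreal (u k) * N (\<alpha> / 2^(k+1)) \<le> ennreal ((Kr powr t * \<alpha> powr (p-t) * 2 powr t) * (2 powr (t-p))^k)" .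
      qed (auto intro: nonneg_summable_on_complete)
      also have "\<dots> = ennreal ((Kr powr t * \<alpha> powr (p-t) * 2 powr t) / (1 - 2 powr (t-p)))"
        by (rule geom_ennreal) (use assms(5) in \<open>auto intro: powr_less_one\<close>)
      also have "(Kr powr t * \<alpha> powr (p-t) * 2 powr t) / (1 - 2 powr (t-p)) = Kr powr t * \<alpha> powr (p-t) * D1"
        unfolding D1_def R2[OF assms(5), symmetric] by simp
      finally show ?thesis .
    qed
    have D1pos: "D1 > 0" unfolding D1_def using assms(5) by simp
    show ?thesis
      unfolding g_eq
    proof (rule SUP_least)
      fix \<alpha> :: real assume "\<alpha> \<in> {0<..}"
      then have al: "\<alpha> > 0" by simp
      have "ennreal (\<alpha> powr ((t-p)/p)) * epowr (E \<alpha>) (1/p)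
          \<le> ennreal (\<alpha> powr ((t-p)/p)) * ennreal ((Kr powr t * \<alpha> powr (p-t) * D1) powr (1/p))"
        using Eb[OF al] pp D1pos Kr0 by (intro mult_left_mono epowr_le) auto
      also have "\<dots> = ennreal (D1 powr (1/p) * (Kr powr t) powr (1/p))"
        using R3[OF al _ _ pp, of "Kr powr t" D1 t] D1pos by (simp add: ennreal_mult[symmetric])
      also have "\<dots> = ennreal C1 * epowr K (t / p)"
        unfolding KK C1_def D1_def R7[OF assms(5) pp] using Kr0
        by (simp add: epowr_ennreal ennreal_mult[symmetric] powr_powr)
      finally show "ennreal (\<alpha> powr ((t-p)/p)) * epowr (E \<alpha>) (1/p) \<le> ennreal C1 * epowr K (t / p)" .
    qed
  qed
  have partB: "K \<le> ennreal C2 * epowr \<gamma> (p / t)"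
  proof (cases "\<gamma> = top")
    case True
    then show ?thesis using C2pos by (simp add: epowr_top ennreal_mult_top)
  next
    case False
    then obtain g where gg: "\<gamma> = ennreal g" and g0: "0 \<le> g" by (cases \<gamma>) auto
    have Eb: "E \<alpha> \<le> ennreal (g powr p * \<alpha> powr (p-t))" if al: "\<alpha> > 0" for \<alpha>
    proof -
      have h: "ennreal (\<alpha> powr ((t-p)/p)) * epowr (E \<alpha>) (1/p) \<le> ennreal g"
        unfolding gg[symmetric] g_eq using al by (intro SUP_upper) auto
      have am: "\<alpha> powr (p-t) = 1 / \<alpha> powr (t-p)"
        using powr_minus_divide[of \<alpha> "t-p"] by simp
      have "E \<alpha> \<le> ennreal ((g / \<alpha> powr ((t-p)/p)) powr (1 / (1/p)))"
        by (rule epowr_extract[OF _ _ g0 h]) (use al pp in auto)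
      also have "(g / \<alpha> powr ((t-p)/p)) powr (1 / (1/p)) = g powr p * \<alpha> powr (p-t)"
        using al g0 pp unfolding am by (simp add: powr_divide powr_powr)
      finally show ?thesis .
    qed
    have Nb: "N \<beta> \<le> ennreal (g powr p * \<beta> powr (-t) * D2)" if b: "\<beta> > 0" for \<beta>
    proof -
      define u where "u k = (\<beta> * 2^k) powr (-p)" for k :: nat
      have "N \<beta> \<le> (\<Sum>\<^sub>\<infinity>j\<in>\<Lambda>. \<Sum>\<^sub>\<infinity>k. ennreal (u k) * ennreal (if y j \<le> \<beta> * 2^(k+1) then w j * y j powr p else 0))"
        unfolding N_eq
      proof (rule infsum_mono)
        fix j assume j: "j \<in> \<Lambda>"
        show "ennreal (if \<beta> < y j then w j else 0)
            \<le> (\<Sum>\<^sub>\<infinity>k. ennreal (u k) * ennreal (if y j \<le> \<beta> * 2^(k+1) then w j * y j powr p else 0))"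
        proof (cases "\<beta> < y j")
          case True
          then obtain k :: nat where k: "y j / 2^(k+1) < \<beta>" "\<beta> \<le> y j / 2^k"
            using dyadic_ex[of \<beta> "y j"] b by auto
          have k1: "y j \<le> \<beta> * 2^(k+1)" using k(1) by (simp add: field_simps)
          have k2: "\<beta> * 2^k \<le> y j" using k(2) by (simp add: field_simps)
          have "(\<beta> * 2^k) powr p \<le> y j powr p"
            using k2 b pp by (intro powr_mono2) auto
          then have "w j \<le> u k * (w j * y j powr p)"
            unfolding u_def using wpos[OF j] b
            by (simp add: powr_minus field_simps)
          then have "ennreal (if \<beta> < y j then w j else 0)
              \<le> ennreal (u k) * ennreal (if y j \<le> \<beta> * 2^(k+1) then w j * y j powr p else 0)"
            using True k1 wpos[OF j] unfolding u_def by (simp add: ennreal_mult[symmetric])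
          also have "\<dots> \<le> (\<Sum>\<^sub>\<infinity>k. ennreal (u k) * ennreal (if y j \<le> \<beta> * 2^(k+1) then w j * y j powr p else 0))"
            by (rule term_le_infsum_ennreal)
          finally show ?thesis .
        next
          case False
          then show ?thesis by simp
        qed
      qed (auto intro: nonneg_summable_on_complete)
      also have "\<dots> \<le> (\<Sum>\<^sub>\<infinity>k. \<Sum>\<^sub>\<infinity>j\<in>\<Lambda>. ennreal (u k) * ennreal (if y j \<le> \<beta> * 2^(k+1) then w j * y j powr p else 0))"
        by (rule infsum_swap_le_ennreal)
      also have "\<dots> = (\<Sum>\<^sub>\<infinity>k. ennreal (u k) * E (\<beta> * 2^(k+1)))"
        unfolding E_eq by (simp add: infsum_cmult_ennreal)
      also have "\<dots> \<le> (\<Sum>\<^sub>\<infinity>k::nat. ennreal ((g powr p * \<beta> powr (-t) * 2 powr (p-t)) * (2 powr (-t))^k))"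
      proof (rule infsum_mono)
        fix k :: nat
        have "ennreal (u k) * E (\<beta> * 2^(k+1)) \<le> ennreal (u k) * ennreal (g powr p * (\<beta> * 2^(k+1)) powr (p-t))"
          using Eb[of "\<beta> * 2^(k+1)"] b by (intro mult_left_mono) auto
        also have "\<dots> = ennreal ((g powr p * \<beta> powr (-t) * 2 powr (p-t)) * (2 powr (-t))^k)"
          unfolding u_def R4[OF b, symmetric] by (simp add: ennreal_mult[symmetric])
        finally show "ennreal (u k) * E (\<beta> * 2^(k+1)) \<le> ennreal ((g powr p * \<beta> powr (-t) * 2 powr (p-t)) * (2 powr (-t))^k)" .
      qed (auto intro: nonneg_summable_on_complete)
      also have "\<dots> = ennreal ((g powr p * \<beta> powr (-t) * 2 powr (p-t)) / (1 - 2 powr (-t)))"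
        by (rule geom_ennreal) (use assms(4) in \<open>auto intro: powr_less_one\<close>)
      also have "(g powr p * \<beta> powr (-t) * 2 powr (p-t)) / (1 - 2 powr (-t)) = g powr p * \<beta> powr (-t) * D2"
        unfolding D2_def R5[OF assms(4), symmetric] by simp
      finally show ?thesis .
    qed
    have D2pos: "D2 > 0" unfolding D2_def using assms(4) by simp
    show ?thesis
      unfolding K_eq
    proof (rule SUP_least)
      fix \<beta> :: real assume "\<beta> \<in> {0<..}"
      then have b: "\<beta> > 0" by simp
      have "ennreal \<beta> * epowr (N \<beta>) (1/t)
          \<le> ennreal \<beta> * ennreal ((g powr p * \<beta> powr (-t) * D2) powr (1/t))"
        using Nb[OF b] assms(4) D2pos g0 by (intro mult_left_mono epowr_le) auto
      also have "\<dots> = ennreal (D2 powr (1/t) * (g powr p) powr (1/t))"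
        using R6[OF b _ _ assms(4), of "g powr p" D2] D2pos b by (simp add: ennreal_mult[symmetric])
      also have "\<dots> = ennreal C2 * epowr \<gamma> (p / t)"
        unfolding gg C2_def D2_def R8[OF assms(4)] using g0
        by (simp add: epowr_ennreal ennreal_mult[symmetric] powr_powr)
      finally show "ennreal \<beta> * epowr (N \<beta>) (1/t) \<le> ennreal C2 * epowr \<gamma> (p / t)" .
    qed
  qed
  have iff: "K < \<infinity> \<longleftrightarrow> \<gamma> < \<infinity>"
  proof
    assume "K < \<infinity>"
    then obtain Kr where "K = ennreal Kr" "0 \<le> Kr" by (cases K) auto
    then have "ennreal C1 * epowr K (t / p) < \<infinity>"
      by (simp add: epowr_ennreal ennreal_mult_less_top)
    then show "\<gamma> < \<infinity>" using partA by (meson le_less_trans)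
  next
    assume "\<gamma> < \<infinity>"
    then obtain gr where "\<gamma> = ennreal gr" "0 \<le> gr" by (cases \<gamma>) auto
    then have "ennreal C2 * epowr \<gamma> (p / t) < \<infinity>"
      by (simp add: epowr_ennreal ennreal_mult_less_top)
    then show "K < \<infinity>" using partB by (meson le_less_trans)
  qed
  show ?thesis
    using partA partB iff unfolding k_space_def K_def C1_def C2_def by simp
qed

end
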